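(* Let $\mathcal{L}(X,\phi)$ be smooth on $(0,\infty)\times I$ ($I$ an open interval) with $\mathcal{L}_X\neq0$ and $\mathcal{L}_X+2X\mathcal{L}_{XX}\neq 0$. Define $$c_{\rm s}^2=\frac{\mathcal{L}_X}{\mathcal{L}_X+2X\mathcal{L}_{XX}},\qquad \tau=\mathcal{L}_\phi-\frac{2X\mathcal{L}_X\mathcal{L}_{X\phi}-\mathcal{L}_X\mathcal{L}_\phi}{\mathcal{L}_X+2X\mathcal{L}_{XX}}.$$ Then (a) $\tau=\left.\partial p/\partial\phi\right|_{\rho}$, i.e. $\tau=p_\phi-p_X\rho_\phi/\rho_X$ where $p=\mathcal{L}$, $\rho=2X\mathcal{L}_X-\mathcal{L}$; (b) $\tau\equiv 0$ on the domain if and only if $\left(\dfrac{\mathcal{L}_\phi}{X\mathcal{L}_X}\right)_X\equiv 0$; and (c) $\tau\equiv0$ if and only if there exist smooth functions $f$ on $I$ and $G$ on $(0,\infty)$ with $\mathcal{L}(X,\phi)=G(e^{-2f(\phi)}X)$, i.e. the Lagrangian can be brought to purely kinetic form by the field redefinition $\tilde\phi_{,\mu}=e^{-f(\phi)}\phi_{,\mu}$.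
   Context: $X=\tfrac12 g^{\mu\nu}\phi_{,\mu}\phi_{,\nu}$ is the kinetic term of the scalar field $\phi$; subscripts $X,\phi$ denote partial derivatives. $c_{\rm s}^2=p_X/\rho_X$ is the adiabatic speed of sound (derivative of $p$ with respect to $\rho$ at fixed $\phi$), and $\tau$ is the coefficient of the entropy-per-particle perturbation in the evolution equation of the gravitational potential; $\tau=0$ corresponds to adiabatic perturbations. *)

theory Defs
  imports "HOL-Analysis.Analysis"
begin

definition pdX :: "(real \<Rightarrow> real \<Rightarrow> real) \<Rightarrow> real \<Rightarrow> real \<Rightarrow> real" where
  "pdX L = (\<lambda>X ph. deriv (\<lambda>x. L x ph) X)"

definition pdphi :: "(real \<Rightarrow> real \<Rightarrow> real) \<Rightarrow> real \<Rightarrow> real \<Rightarrow> real" where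
  "pdphi L = (\<lambda>X ph. deriv (\<lambda>p. L X p) ph)"

fun iter_pd :: "bool list \<Rightarrow> (real \<Rightarrow> real \<Rightarrow> real) \<Rightarrow> real \<Rightarrow> real \<Rightarrow> real" where
  "iter_pd [] L = L"
| "iter_pd (b # ds) L = (if b then pdX (iter_pd ds L) else pdphi (iter_pd ds L))"

definition smooth2_on :: "(real \<Rightarrow> real \<Rightarrow> real) \<Rightarrow> (real \<times> real) set \<Rightarrow> bool" where
  "smooth2_on L U \<longleftrightarrow> (\<forall>ds. (\<lambda>z. iter_pd ds L (fst z) (snd z)) differentiable_on U)"

definition smooth1_on :: "(real \<Rightarrow> real) \<Rightarrow> real set \<Rightarrow> bool" where
  "smooth1_on f S \<longleftrightarrow> (\<forall>n. (deriv ^^ n) f differentiable_on S)"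

definition cs2 :: "(real \<Rightarrow> real \<Rightarrow> real) \<Rightarrow> real \<Rightarrow> real \<Rightarrow> real" where
  "cs2 L X ph = pdX L X ph / (pdX L X ph + 2 * X * pdX (pdX L) X ph)"

definition tau :: "(real \<Rightarrow> real \<Rightarrow> real) \<Rightarrow> real \<Rightarrow> real \<Rightarrow> real" where
  "tau L X ph = pdphi L X ph
     - (2 * X * pdX L X ph * pdphi (pdX L) X ph - pdX L X ph * pdphi L X ph)
       / (pdX L X ph + 2 * X * pdX (pdX L) X ph)"

definition rho :: "(real \<Rightarrow> real \<Rightarrow> real) \<Rightarrow> real \<Rightarrow> real \<Rightarrow> real" where
  "rho L = (\<lambda>X ph. 2 * X * pdX L X ph - L X ph)"

end

theory Submission
  imports Defs
begin


lemma pdX_deriv: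
  assumes "(\<lambda>z. M (fst z) (snd z)) differentiable (at (x,p))"
  shows "((\<lambda>t. M t p) has_real_derivative pdX M x p) (at x)"
proof -
  have e: "(\<lambda>t. M t p) = (\<lambda>z. M (fst z) (snd z)) \<circ> (\<lambda>t. (t,p))" by auto
  have "(\<lambda>t::real. (t,p)) differentiable (at x)"
    by (intro derivative_intros)
  then have "(\<lambda>t. M t p) differentiable (at x)"
    unfolding e using assms by (intro differentiable_chain_at) auto
  then show ?thesis unfolding pdX_def
    using DERIV_deriv_iff_real_differentiable by blast
qed

lemma pdphi_deriv:
  assumes "(\<lambda>z. M (fst z) (snd z)) differentiable (at (x,p))"
  shows "((\<lambda>t. M x t) has_real_derivative pdphi M x p) (at p)"
proof -
  have e: "(\<lambda>t. M x t) = (\<lambda>z. M (fst z) (snd z)) \<circ> (\<lambda>t. (x,t))" by auto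
  have "(\<lambda>t::real. (x,t)) differentiable (at p)"
    by (intro derivative_intros)
  then have "(\<lambda>t. M x t) differentiable (at p)"
    unfolding e using assms by (intro differentiable_chain_at) auto
  then show ?thesis unfolding pdphi_def
    using DERIV_deriv_iff_real_differentiable by blast
qed

lemma schwarz:
  fixes M :: "real \<Rightarrow> real \<Rightarrow> real"
  assumes U: "open U" "(x,p) \<in> U"
  and dX: "\<forall>z\<in>U. (\<lambda>z. pdX M (fst z) (snd z)) differentiable (at z)"
  and dP: "\<forall>z\<in>U. (\<lambda>z. pdphi M (fst z) (snd z)) differentiable (at z)"
  and d0: "\<forall>z\<in>U. (\<lambda>z. M (fst z) (snd z)) differentiable (at z)"
  and cXP: "continuous_on U (\<lambda>z. pdphi (pdX M) (fst z) (snd z))"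
  and cPX: "continuous_on U (\<lambda>z. pdX (pdphi M) (fst z) (snd z))"
  shows "pdphi (pdX M) x p = pdX (pdphi M) x p"
proof (rule ccontr)
  let ?a = "pdphi (pdX M) x p" and ?b = "pdX (pdphi M) x p"
  assume ne: "?a \<noteq> ?b"
  define e where "e = \<bar>?a - ?b\<bar> / 2"
  have e: "e > 0" using ne by (simp add: e_def)
  obtain r1 where r1: "r1 > 0" "\<And>z. z \<in> U \<Longrightarrow> dist z (x,p) < r1 \<Longrightarrow>
      \<bar>pdphi (pdX M) (fst z) (snd z) - ?a\<bar> < e"
    using cXP U(2) e unfolding continuous_on_iff dist_real_def by (metis fst_conv snd_conv)
  obtain r2 where r2: "r2 > 0" "\<And>z. z \<in> U \<Longrightarrow> dist z (x,p) < r2 \<Longrightarrow>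
      \<bar>pdX (pdphi M) (fst z) (snd z) - ?b\<bar> < e"
    using cPX U(2) e unfolding continuous_on_iff dist_real_def by (metis fst_conv snd_conv)
  obtain r3 where r3: "r3 > 0" "ball (x,p) r3 \<subseteq> U"
    using U open_contains_ball by blast
  define h where "h = min r1 (min r2 r3) / 3"
  have h: "h > 0" using r1 r2 r3 by (simp add: h_def)
  have box: "(s,t) \<in> U \<and> dist (s,t) (x,p) < r1 \<and> dist (s,t) (x,p) < r2"
    if "x \<le> s" "s \<le> x+h" "p \<le> t" "t \<le> p+h" for s t
  proof -
    have "dist (s,t) (x,p) = norm (s - x, t - p)" by (simp add: dist_norm)
    also have "\<dots> \<le> norm (s-x) + norm (t-p)" by (rule norm_Pair_le)
    also have "\<dots> \<le> 2*h" using that by simp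
    finally have dd: "dist (s,t) (x,p) \<le> 2*h" .
    have "2*h < min r1 (min r2 r3)" using r1 r2 r3 unfolding h_def by (simp add: min_def)
    then have "dist (s,t) (x,p) < r3" "dist (s,t) (x,p) < r1" "dist (s,t) (x,p) < r2" using dd by auto
    then show ?thesis using r3 by (auto simp: dist_commute)
  qed
  define D where "D = M (x+h) (p+h) - M (x+h) p - M x (p+h) + M x p"
  obtain s1 where s1: "x < s1" "s1 < x+h"
    "(M (x+h) (p+h) - M (x+h) p) - (M x (p+h) - M x p) = h * (pdX M s1 (p+h) - pdX M s1 p)"
  proof -
    have "\<exists>z. x < z \<and> z < x+h \<and> (M (x+h) (p+h) - M (x+h) p) - (M x (p+h) - M x p)
        = (x+h - x) * (pdX M z (p+h) - pdX M z p)"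
    proof (rule MVT2[where f="\<lambda>s. M s (p+h) - M s p"])
      show "x < x+h" using h by simp
      fix s assume "x \<le> s" "s \<le> x+h"
      then have "(s,p+h) \<in> U" "(s,p) \<in> U" using box h by auto
      then show "((\<lambda>s. M s (p+h) - M s p) has_real_derivative pdX M s (p+h) - pdX M s p) (at s)"
        using d0 by (intro derivative_intros pdX_deriv) auto
    qed
    then show ?thesis using that by auto
  qed
  obtain t1 where t1: "p < t1" "t1 < p+h"
    "pdX M s1 (p+h) - pdX M s1 p = h * pdphi (pdX M) s1 t1"
  proof -
    have "\<exists>z. p < z \<and> z < p+h \<and> pdX M s1 (p+h) - pdX M s1 p = (p+h - p) * pdphi (pdX M) s1 z"
    proof (rule MVT2[where f="\<lambda>t. pdX M s1 t"])
      show "p < p+h" using h by simp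
      fix t assume "p \<le> t" "t \<le> p+h"
      then have "(s1,t) \<in> U" using box s1 by auto
      then show "((\<lambda>t. pdX M s1 t) has_real_derivative pdphi (pdX M) s1 t) (at t)"
        using dX by (intro pdphi_deriv) auto
    qed
    then show ?thesis using that by auto
  qed
  obtain t2 where t2: "p < t2" "t2 < p+h"
    "(M (x+h) (p+h) - M x (p+h)) - (M (x+h) p - M x p) = h * (pdphi M (x+h) t2 - pdphi M x t2)"
  proof -
    have "\<exists>z. p < z \<and> z < p+h \<and> (M (x+h) (p+h) - M x (p+h)) - (M (x+h) p - M x p)
        = (p+h - p) * (pdphi M (x+h) z - pdphi M x z)"
    proof (rule MVT2[where f="\<lambda>t. M (x+h) t - M x t"])
      show "p < p+h" using h by simp
      fix t assume "p \<le> t" "t \<le> p+h"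
      then have "(x+h,t) \<in> U" "(x,t) \<in> U" using box h by auto
      then show "((\<lambda>t. M (x+h) t - M x t) has_real_derivative pdphi M (x+h) t - pdphi M x t) (at t)"
        using d0 by (intro derivative_intros pdphi_deriv) auto
    qed
    then show ?thesis using that by auto
  qed
  obtain s2 where s2: "x < s2" "s2 < x+h"
    "pdphi M (x+h) t2 - pdphi M x t2 = h * pdX (pdphi M) s2 t2"
  proof -
    have "\<exists>z. x < z \<and> z < x+h \<and> pdphi M (x+h) t2 - pdphi M x t2 = (x+h - x) * pdX (pdphi M) z t2"
    proof (rule MVT2[where f="\<lambda>s. pdphi M s t2"])
      show "x < x+h" using h by simp
      fix s assume "x \<le> s" "s \<le> x+h"
      then have "(s,t2) \<in> U" using box t2 by auto
      then show "((\<lambda>s. pdphi M s t2) has_real_derivative pdX (pdphi M) s t2) (at s)"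
        using dP by (intro pdX_deriv) auto
    qed
    then show ?thesis using that by auto
  qed
  have "h * (h * pdphi (pdX M) s1 t1) = h * (h * pdX (pdphi M) s2 t2)"
    using s1(3) t1(3) t2(3) s2(3) by (simp add: algebra_simps)
  then have eq: "pdphi (pdX M) s1 t1 = pdX (pdphi M) s2 t2" using h by simp
  have "\<bar>pdphi (pdX M) s1 t1 - ?a\<bar> < e"
    using r1(2)[of "(s1,t1)"] box[of s1 t1] s1 t1 by auto
  moreover have "\<bar>pdX (pdphi M) s2 t2 - ?b\<bar> < e"
    using r2(2)[of "(s2,t2)"] box[of s2 t2] s2 t2 by auto
  ultimately show False using eq unfolding e_def by argo
qed



definition Cn :: "nat \<Rightarrow> (real \<Rightarrow> real) \<Rightarrow> real set \<Rightarrow> bool" where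
  "Cn n f S \<longleftrightarrow> (\<forall>k\<le>n. (deriv ^^ k) f differentiable_on S)"

lemma Cn_0: "Cn 0 f S \<longleftrightarrow> f differentiable_on S"
  by (simp add: Cn_def)

lemma Cn_Suc: "Cn (Suc n) f S \<longleftrightarrow> f differentiable_on S \<and> Cn n (deriv f) S"
proof -
  have "(\<forall>k\<le>Suc n. P k) \<longleftrightarrow> P 0 \<and> (\<forall>k\<le>n. P (Suc k))" for P
    by (metis Suc_le_mono le0 not0_implies_Suc)
  then show ?thesis unfolding Cn_def by (simp add: funpow_Suc_right del: funpow.simps)
qed

lemma smooth1_Cn: "smooth1_on f S \<longleftrightarrow> (\<forall>n. Cn n f S)"
  unfolding smooth1_on_def Cn_def by auto

lemma deriv_local:
  assumes "open S" "\<And>x. x \<in> S \<Longrightarrow> f x = g x" "x \<in> S"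
  shows "deriv f x = deriv g x"
proof (rule deriv_cong_ev)
  show "\<forall>\<^sub>F y in nhds x. f y = g y"
    unfolding eventually_nhds using assms by blast
qed simp

lemma funpow_deriv_local:
  assumes "open S" "\<And>x. x \<in> S \<Longrightarrow> f x = g x" "x \<in> S"
  shows "(deriv ^^ n) f x = (deriv ^^ n) g x"
  using assms(2,3)
proof (induction n arbitrary: f g x)
  case 0 then show ?case by simp
next
  case (Suc n)
  have "\<And>y. y \<in> S \<Longrightarrow> deriv f y = deriv g y"
    using deriv_local[OF assms(1)] Suc.prems by blast
  from Suc.IH[OF this Suc.prems(2)] show ?case
    by (simp add: funpow_Suc_right del: funpow.simps)
qed

lemma diff_local:
  assumes "\<And>x. x \<in> S \<Longrightarrow> f x = g x" "f differentiable_on S"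
  shows "g differentiable_on S"
  unfolding differentiable_on_def
proof
  fix x assume x: "x \<in> S"
  have "f differentiable (at x within S)" using assms(2) x unfolding differentiable_on_def by blast
  then show "g differentiable (at x within S)"
    by (rule differentiable_transform_within[of f x S 1 g]) (use x assms(1) in auto)
qed

lemma Cn_local:
  assumes "open S" "\<And>x. x \<in> S \<Longrightarrow> f x = g x" "Cn n f S"
  shows "Cn n g S"
  unfolding Cn_def
proof (intro allI impI)
  fix k assume "k \<le> n"
  then have "(deriv ^^ k) f differentiable_on S" using assms(3) Cn_def by blast
  moreover have "\<And>x. x \<in> S \<Longrightarrow> (deriv ^^ k) f x = (deriv ^^ k) g x"
    by (rule funpow_deriv_local[OF assms(1)]) (use assms(2) in auto)
  ultimately show "(deriv ^^ k) g differentiable_on S"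
    using diff_local by blast
qed

lemma Cn_mono: "Cn (Suc n) f S \<Longrightarrow> Cn n f S"
  unfolding Cn_def by auto

lemma diff_at:
  assumes "open S" "f differentiable_on S" "x \<in> S"
  shows "(f has_real_derivative deriv f x) (at x)"
  using assms differentiable_on_eq_differentiable_at DERIV_deriv_iff_real_differentiable by blast

lemma Cn_const: "Cn n (\<lambda>x. c) S"
proof (induction n arbitrary: c)
  case 0 then show ?case by (simp add: Cn_0)
next
  case (Suc n) then show ?case by (simp add: Cn_Suc)
qed

lemma Cn_add:
  assumes "open S" "Cn n f S" "Cn n g S"
  shows "Cn n (\<lambda>x. f x + g x) S"
  using assms(2,3)
proof (induction n arbitrary: f g)
  case 0 then show ?case by (simp add: Cn_0 differentiable_on_add)
next
  case (Suc n)
  have fd: "f differentiable_on S" and gd: "g differentiable_on S"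
    and f': "Cn n (deriv f) S" and g': "Cn n (deriv g) S" using Suc.prems by (auto simp: Cn_Suc)
  have "Cn n (\<lambda>x. deriv f x + deriv g x) S" using Suc.IH[OF f' g'] .
  moreover have "deriv f x + deriv g x = deriv (\<lambda>x. f x + g x) x" if "x \<in> S" for x
    using diff_at[OF assms(1) fd that] diff_at[OF assms(1) gd that]
    by (intro DERIV_imp_deriv[symmetric] derivative_intros) auto
  ultimately have "Cn n (deriv (\<lambda>x. f x + g x)) S" by (rule Cn_local[OF assms(1), rotated])
  then show ?case using fd gd by (simp add: Cn_Suc differentiable_on_add)
qed

lemma Cn_mult:
  assumes "open S" "Cn n f S" "Cn n g S"
  shows "Cn n (\<lambda>x. f x * g x) S"
  using assms(2,3)
proof (induction n arbitrary: f g)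
  case 0 then show ?case by (simp add: Cn_0 differentiable_on_mult)
next
  case (Suc n)
  have fd: "f differentiable_on S" and gd: "g differentiable_on S"
    and f': "Cn n (deriv f) S" and g': "Cn n (deriv g) S" using Suc.prems by (auto simp: Cn_Suc)
  have f0: "Cn n f S" and g0: "Cn n g S" using Suc.prems Cn_mono by auto
  have "Cn n (\<lambda>x. deriv f x * g x + f x * deriv g x) S"
    using Cn_add[OF assms(1) Suc.IH[OF f' g0] Suc.IH[OF f0 g']] .
  moreover have "deriv f x * g x + f x * deriv g x = deriv (\<lambda>x. f x * g x) x" if "x \<in> S" for x
    using diff_at[OF assms(1) fd that] diff_at[OF assms(1) gd that]
    by (intro DERIV_imp_deriv[symmetric] derivative_eq_intros) auto
  ultimately have "Cn n (deriv (\<lambda>x. f x * g x)) S" by (rule Cn_local[OF assms(1), rotated])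
  then show ?case using fd gd by (simp add: Cn_Suc differentiable_on_mult)
qed

lemma Cn_inverse:
  assumes "open S" "Cn n g S" "\<And>x. x \<in> S \<Longrightarrow> g x \<noteq> 0"
  shows "Cn n (\<lambda>x. inverse (g x)) S"
  using assms(2)
proof (induction n)
  case 0
  then have "g differentiable_on S" by (simp add: Cn_0)
  then have "(\<lambda>x. inverse (g x)) differentiable_on S"
    unfolding differentiable_on_def using assms(3) differentiable_inverse by blast
  then show ?case by (simp add: Cn_0)
next
  case (Suc n)
  have gd: "g differentiable_on S" and g': "Cn n (deriv g) S" using Suc.prems by (auto simp: Cn_Suc)
  have ig: "Cn n (\<lambda>x. inverse (g x)) S" using Suc.IH[OF Cn_mono[OF Suc.prems]] .
  have igd: "(\<lambda>x. inverse (g x)) differentiable_on S"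
    using gd assms(3) differentiable_inverse unfolding differentiable_on_def by blast
  have "Cn n (\<lambda>x. (-1) * (deriv g x * (inverse (g x) * inverse (g x)))) S"
    by (rule Cn_mult[OF assms(1) Cn_const Cn_mult[OF assms(1) g' Cn_mult[OF assms(1) ig ig]]])
  moreover have "(-1) * (deriv g x * (inverse (g x) * inverse (g x))) = deriv (\<lambda>x. inverse (g x)) x"
    if "x \<in> S" for x
  proof -
    have "DERIV (\<lambda>x. inverse (g x)) x :> - (deriv g x * inverse (g x ^ Suc (Suc 0)))"
      using diff_at[OF assms(1) gd that] assms(3)[OF that] by (rule DERIV_inverse_fun)
    then have "deriv (\<lambda>x. inverse (g x)) x = - (deriv g x * inverse (g x ^ Suc (Suc 0)))"
      by (rule DERIV_imp_deriv)
    moreover have "g x ^ Suc (Suc 0) = g x * g x" by simp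
    ultimately show ?thesis by (simp add: inverse_mult_distrib)
  qed
  ultimately have "Cn n (deriv (\<lambda>x. inverse (g x))) S" by (rule Cn_local[OF assms(1), rotated])
  then show ?case using igd by (simp add: Cn_Suc)
qed



lemma chain2:
  fixes M :: "real \<Rightarrow> real \<Rightarrow> real"
  assumes dM: "(\<lambda>z. M (fst z) (snd z)) differentiable (at (a t, t))"
  and da: "(a has_real_derivative a') (at t)"
  shows "((\<lambda>s. M (a s) s) has_real_derivative (a' * pdX M (a t) t + pdphi M (a t) t)) (at t)"
proof -
  let ?M = "\<lambda>z. M (fst z) (snd z)"
  obtain L' where hd: "(?M has_derivative L') (at (a t, t))"
    using dM unfolding differentiable_def by blast
  have lin: "linear L'" using hd by (rule has_derivative_linear)
  have p1: "((\<lambda>s. (a s, s)) has_derivative (\<lambda>d. (a' * d, d))) (at t)"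
    using da unfolding has_field_derivative_def
    by (intro has_derivative_Pair) auto
  have c1: "((?M \<circ> (\<lambda>s. (a s, s))) has_derivative (L' \<circ> (\<lambda>d. (a' * d, d)))) (at t)"
    using p1 hd by (intro diff_chain_at) auto
  have px1: "((\<lambda>s. (s, t)) has_derivative (\<lambda>d. (d, 0))) (at (a t))"
    by (intro has_derivative_Pair) auto
  have px2: "((?M \<circ> (\<lambda>s. (s, t))) has_derivative (L' \<circ> (\<lambda>d. (d, 0)))) (at (a t))"
    using px1 hd by (intro diff_chain_at) auto
  have px3: "((\<lambda>s. M s t) has_derivative (\<lambda>d. pdX M (a t) t * d)) (at (a t))"
    using pdX_deriv[OF dM] unfolding has_field_derivative_def by simp
  have ex: "(L' \<circ> (\<lambda>d. (d, 0))) = (\<lambda>d. pdX M (a t) t * d)"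
    using px2 px3 by (intro has_derivative_unique) (auto simp: o_def)
  have pp1: "((\<lambda>s. (a t, s)) has_derivative (\<lambda>d. (0, d))) (at t)"
    by (intro has_derivative_Pair) auto
  have pp2: "((?M \<circ> (\<lambda>s. (a t, s))) has_derivative (L' \<circ> (\<lambda>d. (0, d)))) (at t)"
    using pp1 hd by (intro diff_chain_at) auto
  have pp3: "((\<lambda>s. M (a t) s) has_derivative (\<lambda>d. pdphi M (a t) t * d)) (at t)"
    using pdphi_deriv[OF dM] unfolding has_field_derivative_def by simp
  have ep: "(L' \<circ> (\<lambda>d. (0, d))) = (\<lambda>d. pdphi M (a t) t * d)"
    using pp2 pp3 by (intro has_derivative_unique) (auto simp: o_def)
  have "L' (a' * d, d) = (a' * pdX M (a t) t + pdphi M (a t) t) * d" for d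
  proof -
    have "L' (a' * d, d) = L' ((a' * d, 0) + (0, d))" by simp
    also have "\<dots> = L' (a' * d, 0) + L' (0, d)" by (rule linear_add[OF lin])
    also have "\<dots> = pdX M (a t) t * (a' * d) + pdphi M (a t) t * d"
      using fun_cong[OF ex, of "a' * d"] fun_cong[OF ep, of d] by simp
    finally show ?thesis by (simp add: algebra_simps)
  qed
  then have "(L' \<circ> (\<lambda>d. (a' * d, d))) = (\<lambda>d. (a' * pdX M (a t) t + pdphi M (a t) t) * d)"
    by (auto simp: o_def)
  then show ?thesis using c1 unfolding has_field_derivative_def by (simp add: o_def)
qed

lemma antideriv:
  fixes h :: "real \<Rightarrow> real"
  assumes I: "open I" "is_interval I" "c \<in> I" and cont: "\<And>x. x \<in> I \<Longrightarrow> isCont h x"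
  shows "\<exists>F. \<forall>x\<in>I. (F has_real_derivative h x) (at x)"
proof (intro exI ballI)
  fix x assume x: "x \<in> I"
  have mI: "min c x \<in> I" "max c x \<in> I" using x I(3) by (auto simp: min_def max_def)
  obtain e1 where e1: "e1 > 0" "ball (min c x) e1 \<subseteq> I" using I(1) mI(1) open_contains_ball by blast
  obtain e2 where e2: "e2 > 0" "ball (max c x) e2 \<subseteq> I" using I(1) mI(2) open_contains_ball by blast
  define d where "d = min c x - e1/2"
  define e where "e = max c x + e2/2"
  have dI: "d \<in> I" using e1 by (intro subsetD[OF e1(2)]) (simp add: d_def dist_real_def)
  have eI: "e \<in> I" using e2 by (intro subsetD[OF e2(2)]) (simp add: e_def dist_real_def)
  have sub: "{d..e} \<subseteq> I"
  proof
    fix y assume "y \<in> {d..e}"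
    then have "d \<le> y" "y \<le> e" by auto
    then show "y \<in> I" using I(2) dI eI unfolding is_interval_1 by blast
  qed
  have cont': "continuous_on {d..e} h"
    by (rule continuous_at_imp_continuous_on) (use sub cont in blast)
  have "((\<lambda>u. LBINT y=c..u. h y) has_vector_derivative h x) (at x within {d..e})"
  proof (rule interval_integral_FTC2[OF _ _ cont'])
    show "d \<le> c" "c \<le> e" "d \<le> x" "x \<le> e" using e1 e2 unfolding d_def e_def by linarith+
  qed
  then have wi: "((\<lambda>u. LBINT y=c..u. h y) has_vector_derivative h x) (at x within {d<..<e})"
    by (rule has_vector_derivative_within_subset) (simp add: subset_iff)
  then have "((\<lambda>u. LBINT y=c..u. h y) has_vector_derivative h x) (at x)"
  proof -
    have "d < x" unfolding d_def using e1(1) min.cobounded2[of c x] by linarith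
    moreover have "x < e" unfolding e_def using e2(1) max.cobounded2[of x c] by linarith
    ultimately have xin: "x \<in> {d<..<e}" by simp
    show ?thesis using iffD1[OF has_vector_derivative_within_open[OF xin open_greaterThanLessThan] wi] .
  qed
  then show "((\<lambda>u. LBINT y=c..u. h y) has_real_derivative h x) (at x)"
    by (simp add: has_real_derivative_iff_has_vector_derivative)
qed



theorem mainTheorem2:
  fixes L :: "real \<Rightarrow> real \<Rightarrow> real" and I :: "real set"
  assumes I_open: "open I" and I_interval: "is_interval I"
    and smooth: "smooth2_on L ({0<..} \<times> I)"
    and LX_nz: "\<And>X ph. X > 0 \<Longrightarrow> ph \<in> I \<Longrightarrow> pdX L X ph \<noteq> 0"
    and den_nz: "\<And>X ph. X > 0 \<Longrightarrow> ph \<in> I \<Longrightarrow> pdX L X ph + 2 * X * pdX (pdX L) X ph \<noteq> 0"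
  shows "(\<forall>X ph. X > 0 \<longrightarrow> ph \<in> I \<longrightarrow>
            tau L X ph = pdphi L X ph - pdX L X ph * pdphi (rho L) X ph / pdX (rho L) X ph)
       \<and> ((\<forall>X ph. X > 0 \<longrightarrow> ph \<in> I \<longrightarrow> tau L X ph = 0) \<longleftrightarrow>
          (\<forall>X ph. X > 0 \<longrightarrow> ph \<in> I \<longrightarrow>
             pdX (\<lambda>x p. pdphi L x p / (x * pdX L x p)) X ph = 0))
       \<and> ((\<forall>X ph. X > 0 \<longrightarrow> ph \<in> I \<longrightarrow> tau L X ph = 0) \<longleftrightarrow>
          (\<exists>f G. smooth1_on f I \<and> smooth1_on G {0<..} \<and>
             (\<forall>X ph. X > 0 \<longrightarrow> ph \<in> I \<longrightarrow> L X ph = G (exp (- 2 * f ph) * X))))"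
proof -
  define U :: "(real \<times> real) set" where "U = {0<..} \<times> I"
  have U_open: "open U" unfolding U_def using I_open by (simp add: open_Times)
  have ddon: "(\<lambda>z. iter_pd ds L (fst z) (snd z)) differentiable_on U" for ds
    using smooth unfolding smooth2_on_def U_def by blast
  have dd: "(\<lambda>z. iter_pd ds L (fst z) (snd z)) differentiable (at (X,ph))"
    if "X > 0" "ph \<in> I" for ds X ph
  proof -
    have "(X,ph) \<in> U" using that by (simp add: U_def)
    then show ?thesis using ddon[of ds] differentiable_on_eq_differentiable_at[OF U_open] by blast
  qed
  have d0: "(\<lambda>z. L (fst z) (snd z)) differentiable (at (X,ph))" if "X > 0" "ph \<in> I" for X ph
    using dd[OF that, of "[]"] by simp
  have dX: "(\<lambda>z. pdX L (fst z) (snd z)) differentiable (at (X,ph))" if "X > 0" "ph \<in> I" for X ph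
    using dd[OF that, of "[True]"] by simp
  have dP: "(\<lambda>z. pdphi L (fst z) (snd z)) differentiable (at (X,ph))" if "X > 0" "ph \<in> I" for X ph
    using dd[OF that, of "[False]"] by simp
  have DX0: "((\<lambda>t. L t ph) has_real_derivative pdX L X ph) (at X)" if "X > 0" "ph \<in> I" for X ph
    by (rule pdX_deriv[OF d0[OF that]])
  have DP0: "((\<lambda>t. L X t) has_real_derivative pdphi L X ph) (at ph)" if "X > 0" "ph \<in> I" for X ph
    by (rule pdphi_deriv[OF d0[OF that]])
  have DXX: "((\<lambda>t. pdX L t ph) has_real_derivative pdX (pdX L) X ph) (at X)" if "X > 0" "ph \<in> I" for X ph
    by (rule pdX_deriv[OF dX[OF that]])
  have DXP: "((\<lambda>t. pdX L X t) has_real_derivative pdphi (pdX L) X ph) (at ph)" if "X > 0" "ph \<in> I" for X ph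
    by (rule pdphi_deriv[OF dX[OF that]])
  have DPX: "((\<lambda>t. pdphi L t ph) has_real_derivative pdX (pdphi L) X ph) (at X)" if "X > 0" "ph \<in> I" for X ph
    by (rule pdX_deriv[OF dP[OF that]])
  have sym: "pdphi (pdX L) X ph = pdX (pdphi L) X ph" if "X > 0" "ph \<in> I" for X ph
  proof (rule schwarz[OF U_open])
    show "(X, ph) \<in> U" using that by (simp add: U_def)
    show "\<forall>z\<in>U. (\<lambda>z. pdX L (fst z) (snd z)) differentiable at z"
      using dX by (auto simp: U_def)
    show "\<forall>z\<in>U. (\<lambda>z. pdphi L (fst z) (snd z)) differentiable at z"
      using dP by (auto simp: U_def)
    show "\<forall>z\<in>U. (\<lambda>z. L (fst z) (snd z)) differentiable at z"
      using d0 by (auto simp: U_def)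
    show "continuous_on U (\<lambda>z. pdphi (pdX L) (fst z) (snd z))"
      using differentiable_imp_continuous_on[OF ddon[of "[False,True]"]] by simp
    show "continuous_on U (\<lambda>z. pdX (pdphi L) (fst z) (snd z))"
      using differentiable_imp_continuous_on[OF ddon[of "[True,False]"]] by simp
  qed
  have partA: "tau L X ph = pdphi L X ph - pdX L X ph * pdphi (rho L) X ph / pdX (rho L) X ph"
    if "X > 0" "ph \<in> I" for X ph
  proof -
    have "pdphi (rho L) X ph = deriv (\<lambda>p. 2 * X * pdX L X p - L X p) ph"
      unfolding pdphi_def[of "rho L"] by (simp add: rho_def)
    also have "\<dots> = 2 * X * pdphi (pdX L) X ph - pdphi L X ph"
      by (intro DERIV_imp_deriv DERIV_diff DERIV_cmult DXP DP0 that)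
    finally have e1: "pdphi (rho L) X ph = 2 * X * pdphi (pdX L) X ph - pdphi L X ph" .
    have "pdX (rho L) X ph = deriv (\<lambda>x. 2 * x * pdX L x ph - L x ph) X"
      unfolding pdX_def[of "rho L"] by (simp add: rho_def)
    also have "\<dots> = pdX L X ph + 2 * X * pdX (pdX L) X ph"
    proof (rule DERIV_imp_deriv)
      have "((\<lambda>x. 2 * x * pdX L x ph - L x ph) has_real_derivative
          (2 * pdX L X ph + 2 * X * pdX (pdX L) X ph) - pdX L X ph) (at X)"
      proof (rule DERIV_diff[OF _ DX0[OF that]])
        have "((\<lambda>x. (2 * x) * pdX L x ph) has_real_derivative
          2 * pdX L X ph + (2 * X) * pdX (pdX L) X ph) (at X)"
          using DERIV_mult[OF DERIV_cmult[OF DERIV_ident, of 2] DXX[OF that]] by (simp add: algebra_simps)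
        then show "((\<lambda>x. 2 * x * pdX L x ph) has_real_derivative
          2 * pdX L X ph + 2 * X * pdX (pdX L) X ph) (at X)" by simp
      qed
      then show "((\<lambda>x. 2 * x * pdX L x ph - L x ph) has_real_derivative
          pdX L X ph + 2 * X * pdX (pdX L) X ph) (at X)" by (simp add: algebra_simps)
    qed
    finally have e2: "pdX (rho L) X ph = pdX L X ph + 2 * X * pdX (pdX L) X ph" .
    show ?thesis unfolding tau_def e1 e2 by (simp add: algebra_simps)
  qed
  define Q where "Q = (\<lambda>x p. pdphi L x p / (x * pdX L x p))"
  define N where "N = (\<lambda>X ph. pdX (pdphi L) X ph * (X * pdX L X ph)
          - pdphi L X ph * (pdX L X ph + X * pdX (pdX L) X ph))"
  have DQ: "((\<lambda>x. Q x ph) has_real_derivative N X ph / ((X * pdX L X ph) * (X * pdX L X ph))) (at X)"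
    if "X > 0" "ph \<in> I" for X ph
  proof -
    have dn: "((\<lambda>x. x * pdX L x ph) has_real_derivative pdX L X ph + X * pdX (pdX L) X ph) (at X)"
      using DERIV_mult[OF DERIV_ident DXX[OF that]] by (simp add: mult.commute)
    have nz: "X * pdX L X ph \<noteq> 0" using that LX_nz by simp
    show ?thesis
      using DERIV_divide[OF DPX[OF that] dn nz] unfolding Q_def N_def by simp
  qed
  have pdXQ: "pdX Q X ph = N X ph / ((X * pdX L X ph) * (X * pdX L X ph))"
    if "X > 0" "ph \<in> I" for X ph
    unfolding pdX_def[of Q] using DERIV_imp_deriv[OF DQ[OF that]] by simp
  have tauN: "tau L X ph = - 2 * N X ph / (pdX L X ph + 2 * X * pdX (pdX L) X ph)"
    if "X > 0" "ph \<in> I" for X ph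
  proof -
    have D: "pdX L X ph + 2 * X * pdX (pdX L) X ph \<noteq> 0" using den_nz that by blast
    show ?thesis unfolding tau_def N_def sym[OF that] using D
      by (simp add: field_simps)
  qed
  have partB: "tau L X ph = 0 \<longleftrightarrow> pdX Q X ph = 0" if "X > 0" "ph \<in> I" for X ph
  proof -
    have D: "pdX L X ph + 2 * X * pdX (pdX L) X ph \<noteq> 0" using den_nz that by blast
    have nz: "X * pdX L X ph \<noteq> 0" using that LX_nz by simp
    show ?thesis unfolding tauN[OF that] pdXQ[OF that] using D nz by simp
  qed
  have B: "(\<forall>X ph. X > 0 \<longrightarrow> ph \<in> I \<longrightarrow> tau L X ph = 0) \<longleftrightarrow>
          (\<forall>X ph. X > 0 \<longrightarrow> ph \<in> I \<longrightarrow> pdX Q X ph = 0)"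
    using partB by blast
  have CR: "\<forall>X ph. X > 0 \<longrightarrow> ph \<in> I \<longrightarrow> tau L X ph = 0"
    if ex: "\<exists>f G. smooth1_on f I \<and> smooth1_on G {0<..} \<and>
             (\<forall>X ph. X > 0 \<longrightarrow> ph \<in> I \<longrightarrow> L X ph = G (exp (- 2 * f ph) * X))"
  proof -
    obtain f G where sf: "smooth1_on f I" and sG: "smooth1_on G {0<..}"
      and eqL: "\<And>X ph. X > 0 \<Longrightarrow> ph \<in> I \<Longrightarrow> L X ph = G (exp (- 2 * f ph) * X)"
      using ex by blast
    have Gd: "G differentiable_on {0<..}" using sG unfolding smooth1_on_def
      by (metis funpow_0)
    have fd: "f differentiable_on I" using sf unfolding smooth1_on_def
      by (metis funpow_0)
    have DG: "(G has_real_derivative deriv G y) (at y)" if "y > 0" for y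
      using diff_at[OF open_greaterThan Gd] that by simp
    have Df: "(f has_real_derivative deriv f p) (at p)" if "p \<in> I" for p
      using diff_at[OF I_open fd that] .
    have Lx: "pdX L X ph = deriv G (exp (- 2 * f ph) * X) * exp (- 2 * f ph)"
      if "X > 0" "ph \<in> I" for X ph
    proof -
      let ?c = "exp (- 2 * f ph)"
      have "pdX L X ph = deriv (\<lambda>x. L x ph) X" by (simp add: pdX_def)
      also have "\<dots> = deriv (\<lambda>x. G (?c * x)) X"
        by (rule deriv_local[OF open_greaterThan]) (use eqL that in auto)
      also have "\<dots> = deriv G (?c * X) * ?c"
      proof (rule DERIV_imp_deriv)
        have "?c * X > 0" using that by simp
        from DERIV_chain2[OF DG[OF this] DERIV_cmult[OF DERIV_ident, of ?c]]
        show "((\<lambda>x. G (?c * x)) has_real_derivative deriv G (?c * X) * ?c) (at X)" by simp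
      qed
      finally show ?thesis .
    qed
    have Lp: "pdphi L X ph = deriv G (exp (- 2 * f ph) * X) * (exp (- 2 * f ph) * (- 2 * deriv f ph) * X)"
      if "X > 0" "ph \<in> I" for X ph
    proof -
      have "pdphi L X ph = deriv (\<lambda>p. L X p) ph" by (simp add: pdphi_def)
      also have "\<dots> = deriv (\<lambda>p. G (exp (- 2 * f p) * X)) ph"
        by (rule deriv_local[OF I_open]) (use eqL that in auto)
      also have "\<dots> = deriv G (exp (- 2 * f ph) * X) * (exp (- 2 * f ph) * (- 2 * deriv f ph) * X)"
      proof (rule DERIV_imp_deriv)
        have pos: "exp (- 2 * f ph) * X > 0" using that by simp
        have "((\<lambda>p. exp (- 2 * f p) * X) has_real_derivative
            exp (- 2 * f ph) * (- 2 * deriv f ph) * X) (at ph)"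
          by (intro DERIV_cmult_right DERIV_fun_exp DERIV_cmult Df that)
        from DERIV_chain2[OF DG[OF pos] this]
        show "((\<lambda>p. G (exp (- 2 * f p) * X)) has_real_derivative
           deriv G (exp (- 2 * f ph) * X) * (exp (- 2 * f ph) * (- 2 * deriv f ph) * X)) (at ph)" .
      qed
      finally show ?thesis .
    qed
    have Qc: "Q X ph = - 2 * deriv f ph" if "X > 0" "ph \<in> I" for X ph
    proof -
      have "pdX L X ph \<noteq> 0" using LX_nz that by blast
      then have "deriv G (exp (- 2 * f ph) * X) \<noteq> 0" using Lx[OF that] by auto
      then show ?thesis unfolding Q_def Lx[OF that] Lp[OF that] using that by simp
    qed
    show ?thesis
    proof (intro allI impI)
      fix X ph :: real assume that: "X > 0" "ph \<in> I"
      have "pdX Q X ph = deriv (\<lambda>x. Q x ph) X" by (simp add: pdX_def)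
      also have "\<dots> = deriv (\<lambda>x. - 2 * deriv f ph) X"
        by (rule deriv_local[OF open_greaterThan]) (use Qc that in auto)
      also have "\<dots> = 0" by simp
      finally show "tau L X ph = 0" using partB[OF that] by simp
    qed
  qed
  have CL: "\<exists>f G. smooth1_on f I \<and> smooth1_on G {0<..} \<and>
             (\<forall>X ph. X > 0 \<longrightarrow> ph \<in> I \<longrightarrow> L X ph = G (exp (- 2 * f ph) * X))"
    if T: "\<forall>X ph. X > 0 \<longrightarrow> ph \<in> I \<longrightarrow> tau L X ph = 0"
  proof (cases "I = {}")
    case True
    have "smooth1_on (\<lambda>x. 0) S" for S using Cn_const smooth1_Cn by blast
    then show ?thesis using True by blast
  next
    case False
    then obtain p0 where p0: "p0 \<in> I" by blast
    have DQ0: "((\<lambda>x. Q x ph) has_real_derivative 0) (at X)" if "X > 0" "ph \<in> I" for X ph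
    proof -
      have "pdX Q X ph = 0" using partB[OF that] T that by blast
      then have z: "N X ph / ((X * pdX L X ph) * (X * pdX L X ph)) = 0" using pdXQ[OF that] by simp
      show ?thesis using DQ[OF that] unfolding z .
    qed
    have Qconst: "Q X ph = Q 1 ph" if "X > 0" "ph \<in> I" for X ph
    proof -
      have "(\<lambda>x. Q x ph) constant_on {0<..}"
      proof (rule has_field_derivative_0_imp_constant_on)
        show "\<And>z. z \<in> {0<..} \<Longrightarrow> ((\<lambda>x. Q x ph) has_real_derivative 0) (at z)"
          using DQ0 that by auto
        show "connected {0::real<..}" by (simp add: convex_connected)
      qed simp
      then show ?thesis unfolding constant_on_def using that by auto
    qed
    define h where "h p = Q 1 p" for p
    have Lp_eq: "pdphi L X ph = h ph * X * pdX L X ph" if "X > 0" "ph \<in> I" for X ph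
    proof -
      have "X * pdX L X ph \<noteq> 0" using that LX_nz by simp
      then show ?thesis using Qconst[OF that] unfolding h_def Q_def
        by (simp add: field_simps)
    qed
    have dP1: "(\<lambda>p. iter_pd ds L 1 p) differentiable_on I" for ds
      unfolding differentiable_on_eq_differentiable_at[OF I_open]
    proof
      fix p assume p: "p \<in> I"
      have e: "(\<lambda>p. iter_pd ds L 1 p) = (\<lambda>z. iter_pd ds L (fst z) (snd z)) \<circ> (\<lambda>p. (1, p))" by auto
      show "(\<lambda>p. iter_pd ds L 1 p) differentiable at p"
        unfolding e by (rule differentiable_chain_at) (use dd[of 1 p ds] p in auto)
    qed
    have CnP: "Cn n (\<lambda>p. iter_pd ds L 1 p) I" for n ds
    proof (induction n arbitrary: ds)
      case 0 then show ?case using dP1 by (simp add: Cn_0)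
    next
      case (Suc n)
      have "deriv (\<lambda>p. iter_pd ds L 1 p) = (\<lambda>p. iter_pd (False # ds) L 1 p)"
        by (simp add: pdphi_def)
      then show ?case using dP1 Suc.IH[of "False # ds"] by (simp add: Cn_Suc)
    qed
    have dX1: "(\<lambda>Y. iter_pd ds L Y p0) differentiable_on {0<..}" for ds
      unfolding differentiable_on_eq_differentiable_at[OF open_greaterThan]
    proof
      fix Y :: real assume Y: "Y \<in> {0<..}"
      have e: "(\<lambda>Y. iter_pd ds L Y p0) = (\<lambda>z. iter_pd ds L (fst z) (snd z)) \<circ> (\<lambda>Y. (Y, p0))" by auto
      show "(\<lambda>Y. iter_pd ds L Y p0) differentiable at Y"
        unfolding e by (rule differentiable_chain_at) (use dd[of Y p0 ds] p0 Y in auto)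
    qed
    have CnX: "Cn n (\<lambda>Y. iter_pd ds L Y p0) {0<..}" for n ds
    proof (induction n arbitrary: ds)
      case 0 then show ?case using dX1 by (simp add: Cn_0)
    next
      case (Suc n)
      have "deriv (\<lambda>Y. iter_pd ds L Y p0) = (\<lambda>Y. iter_pd (True # ds) L Y p0)"
        by (simp add: pdX_def)
      then show ?case using dX1 Suc.IH[of "True # ds"] by (simp add: Cn_Suc)
    qed
    have Ch: "Cn n h I" for n
    proof (rule Cn_local[OF I_open])
      show "Cn n (\<lambda>p. iter_pd [False] L 1 p * inverse (iter_pd [True] L 1 p)) I"
        by (intro Cn_mult[OF I_open] CnP Cn_inverse[OF I_open]) (use LX_nz in auto)
      show "\<And>p. p \<in> I \<Longrightarrow> iter_pd [False] L 1 p * inverse (iter_pd [True] L 1 p) = h p"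
        by (simp add: h_def Q_def divide_inverse)
    qed
    have hcont: "isCont h p" if "p \<in> I" for p
    proof -
      have "h differentiable_on I" using Ch[of 0] by (simp add: Cn_0)
      then have "continuous_on I h" by (rule differentiable_imp_continuous_on)
      then show ?thesis using continuous_on_eq_continuous_at[OF I_open] that by blast
    qed
    obtain F where F: "\<And>x. x \<in> I \<Longrightarrow> (F has_real_derivative h x) (at x)"
      using antideriv[OF I_open I_interval p0 hcont] by blast
    define f where "f p = (F p0 - F p) / 2" for p
    have Df: "(f has_real_derivative (0 - h p) / 2) (at p)" if "p \<in> I" for p
      unfolding f_def[abs_def] by (intro DERIV_cdivide DERIV_diff DERIV_const F that)
    have f0: "f p0 = 0" by (simp add: f_def)
    have sf: "smooth1_on f I"
      unfolding smooth1_Cn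
    proof
      fix n
      have fd: "f differentiable_on I"
        unfolding differentiable_on_eq_differentiable_at[OF I_open]
        using Df real_differentiable_def by blast
      show "Cn n f I"
      proof (cases n)
        case 0 then show ?thesis using fd by (simp add: Cn_0)
      next
        case (Suc m)
        have "Cn m (deriv f) I"
        proof (rule Cn_local[OF I_open])
          show "Cn m (\<lambda>p. (- 1 / 2) * h p) I" by (intro Cn_mult[OF I_open] Cn_const Ch)
          show "\<And>p. p \<in> I \<Longrightarrow> (- 1 / 2) * h p = deriv f p"
            using DERIV_imp_deriv[OF Df] by simp
        qed
        then show ?thesis using fd Suc by (simp add: Cn_Suc)
      qed
    qed
    define G where "G Y = L Y p0" for Y
    have sG: "smooth1_on G {0<..}"
    proof -
      have "G = (\<lambda>Y. iter_pd [] L Y p0)" by (simp add: G_def[abs_def])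
      then show ?thesis unfolding smooth1_Cn using CnX[of _ "[]"] by simp
    qed
    \<comment> \<open>constancy along characteristics\<close>
    have kconst: "L (exp (2 * f t) * Y) t = L (exp (2 * f p0) * Y) p0" if "Y > 0" "t \<in> I" for Y t
    proof -
      define a where "a s = exp (2 * f s) * Y" for s
      have apos: "a s > 0" for s using that by (simp add: a_def)
      have "(\<lambda>s. L (a s) s) constant_on I"
      proof (rule has_field_derivative_0_imp_constant_on)
        show "connected I" using I_interval by (rule is_interval_connected)
        show "open I" by (rule I_open)
        fix z assume z: "z \<in> I"
        have da: "(a has_real_derivative exp (2 * f z) * (2 * ((0 - h z) / 2)) * Y) (at z)"
          unfolding a_def[abs_def] by (intro DERIV_cmult_right DERIV_fun_exp DERIV_cmult Df z)
        have "((\<lambda>s. L (a s) s) has_real_derivative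
            exp (2 * f z) * (2 * ((0 - h z) / 2)) * Y * pdX L (a z) z + pdphi L (a z) z) (at z)"
          by (rule chain2[OF d0[OF apos z] da])
        moreover have "exp (2 * f z) * (2 * ((0 - h z) / 2)) * Y * pdX L (a z) z + pdphi L (a z) z = 0"
          unfolding Lp_eq[OF apos z] by (simp add: a_def algebra_simps)
        ultimately show "((\<lambda>s. L (a s) s) has_real_derivative 0) (at z)" by simp
      qed
      then show ?thesis using that p0 unfolding constant_on_def a_def by auto
    qed
    have eqL: "L X ph = G (exp (- 2 * f ph) * X)" if "X > 0" "ph \<in> I" for X ph
    proof -
      have Y: "exp (- 2 * f ph) * X > 0" using that by simp
      have "exp (2 * f ph) * exp (- 2 * f ph) = exp (2 * f ph + - 2 * f ph)"
        by (rule exp_add[symmetric])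
      then have e: "exp (2 * f ph) * (exp (- 2 * f ph) * X) = X"
        by (simp add: mult.assoc[symmetric])
      have "L X ph = L (exp (2 * f p0) * (exp (- 2 * f ph) * X)) p0"
        using kconst[OF Y that(2)] unfolding e .
      then show ?thesis using f0 by (simp add: G_def)
    qed
    show ?thesis using sf sG eqL by blast
  qed
  show ?thesis using partA B CR CL unfolding Q_def by blast
qed

end
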